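(* Consider smoothed W3DM-$(p,q)$ with parameter $n$, where each triple weight $w(T)$, $T\in[n]^3$, is drawn independently from a distribution with density $f_T:[0,1]\to[0,\phi]$. Then the expected maximum number of iterations of local search under the $(p,q)$-neighbourhood (over all initial matchings and all improving sequences) is $O(n^{6p+6}\phi)$.
   Context: W3DM-$(p,q)$: given $n$ and weights $w:[n]^3\to\mathbb R$, a 3-dimensional matching is a set $S\subseteq[n]^3$ of $n$ triples $(T_1,T_2,T_3)$ such that for each coordinate $k\in\{1,2,3\}$ and each $i\in[n]$ some $T\in S$ has $T_k=i$ (call coordinates 1,2,3 boys, girls, homes). Its weight is $\sum_{T\in S}w(T)$. The $(p,q)$-neighbours of $S$ are the matchings obtained by replacing at most $p$ triples of $S$ by the same number of other triples, such that at most $q$ boys or girls are relocated to new homes. A solution is a matching with no neighbour of strictly larger weight; local search repeatedly moves to a strictly better neighbour. *)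

theory Defs
  imports "HOL-Probability.Probability"
begin

type_synonym triple = "nat \<times> nat \<times> nat"

text \<open>[n] is rendered as {0..<n}. Coordinates: boy = fst, girl = fst o snd, home = snd o snd.\<close>

definition triples :: "nat \<Rightarrow> triple set" where
  "triples n = {0..<n} \<times> {0..<n} \<times> {0..<n}"

definition is_3dm :: "nat \<Rightarrow> triple set \<Rightarrow> bool" where
  "is_3dm n S \<longleftrightarrow> S \<subseteq> triples n \<and> card S = n \<and>
     (\<forall>i<n. (\<exists>T\<in>S. fst T = i) \<and> (\<exists>T\<in>S. fst (snd T) = i) \<and> (\<exists>T\<in>S. snd (snd T) = i))"

definition matching_weight :: "(triple \<Rightarrow> real) \<Rightarrow> triple set \<Rightarrow> real" where
  "matching_weight w S = (\<Sum>T\<in>S. w T)"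

definition relocated_boys :: "triple set \<Rightarrow> triple set \<Rightarrow> nat set" where
  "relocated_boys S S' = {b. \<exists>g h. (b, g, h) \<in> S' \<and> \<not> (\<exists>g'. (b, g', h) \<in> S)}"

definition relocated_girls :: "triple set \<Rightarrow> triple set \<Rightarrow> nat set" where
  "relocated_girls S S' = {g. \<exists>b h. (b, g, h) \<in> S' \<and> \<not> (\<exists>b'. (b', g, h) \<in> S)}"

definition pq_neighbour :: "nat \<Rightarrow> nat \<Rightarrow> nat \<Rightarrow> triple set \<Rightarrow> triple set \<Rightarrow> bool" where
  "pq_neighbour n p q S S' \<longleftrightarrow> is_3dm n S' \<and> card (S - S') \<le> p \<and> card (S' - S) = card (S - S') \<and>
     card (relocated_boys S S') + card (relocated_girls S S') \<le> q"

definition improving_run :: "nat \<Rightarrow> nat \<Rightarrow> nat \<Rightarrow> (triple \<Rightarrow> real) \<Rightarrow> (nat \<Rightarrow> triple set) \<Rightarrow> nat \<Rightarrow> bool" where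
  "improving_run n p q w ss k \<longleftrightarrow> is_3dm n (ss 0) \<and>
     (\<forall>i<k. pq_neighbour n p q (ss i) (ss (Suc i)) \<and>
            matching_weight w (ss i) < matching_weight w (ss (Suc i)))"

definition max_iterations :: "nat \<Rightarrow> nat \<Rightarrow> nat \<Rightarrow> (triple \<Rightarrow> real) \<Rightarrow> nat" where
  "max_iterations n p q w = Max {k. \<exists>ss. improving_run n p q w ss k}"

definition smoothed_weights :: "nat \<Rightarrow> (triple \<Rightarrow> real \<Rightarrow> real) \<Rightarrow> (triple \<Rightarrow> real) measure" where
  "smoothed_weights n f = PiM (triples n) (\<lambda>T. density lborel (\<lambda>x. ennreal (f T x)))"

definition valid_density :: "real \<Rightarrow> (real \<Rightarrow> real) \<Rightarrow> bool" where
  "valid_density \<phi> g \<longleftrightarrow> g \<in> borel_measurable borel \<and>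
     (\<forall>x. 0 \<le> g x \<and> g x \<le> \<phi>) \<and> (\<forall>x. x \<notin> {0..1} \<longrightarrow> g x = 0) \<and>
     (\<integral>\<^sup>+ x. ennreal (g x) \<partial>lborel) = 1"

end

theory Submission
  imports Defs
begin


lemma pow2_sum: "(\<Sum>j<L. (2::nat)^j) = 2^L - 1"
  by (induction L) auto

lemma dyadic: "(K::nat) \<le> 2^L \<Longrightarrow> K \<le> 1 + (\<Sum>j<L. 2^j * (if 2^j < K then 1 else 0))"
proof (induction L arbitrary: K)
  case 0 then show ?case by simp
next
  case (Suc L)
  show ?case
  proof (cases "K \<le> 2^L")
    case True
    then show ?thesis using Suc.IH[OF True] by simp
  next
    case False
    have "\<And>j. j < Suc L \<Longrightarrow> 2^j < K"
    proof -
      fix j assume "j < Suc L"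
      then have "(2::nat)^j \<le> 2^L" by (intro power_increasing) auto
      then show "2^j < K" using False by linarith
    qed
    then have "(\<Sum>j<Suc L. (2::nat)^j * (if 2^j < K then 1 else 0)) = (\<Sum>j<Suc L. 2^j)"
      by (intro sum.cong) auto
    then show ?thesis using Suc.prems pow2_sum[of "Suc L"] by simp
  qed
qed

lemma slice_bound:
  assumes "product_sigma_finite M" "finite J" "T \<notin> J"
    "E \<in> sets (PiM (insert T J) M)"
    "prob_space (PiM J M)"
    "\<And>x. x \<in> space (PiM J M) \<Longrightarrow> (\<integral>\<^sup>+y. indicator E (x(T:=y)) \<partial>M T) \<le> c"
  shows "emeasure (PiM (insert T J) M) E \<le> c"
proof -
  interpret product_sigma_finite M by fact
  interpret P: prob_space "PiM J M" by fact
  have "emeasure (PiM (insert T J) M) E = (\<integral>\<^sup>+w. indicator E w \<partial>PiM (insert T J) M)"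
    using assms(4) by simp
  also have "\<dots> = (\<integral>\<^sup>+ x. (\<integral>\<^sup>+ y. indicator E (x(T := y)) \<partial>(M T)) \<partial>(PiM J M))"
    using assms(2,3,4) by (intro product_nn_integral_insert) auto
  also have "\<dots> \<le> (\<integral>\<^sup>+ x. c \<partial>(PiM J M))"
    using assms(6) by (intro nn_integral_mono) auto
  also have "\<dots> = c" by (simp add: P.emeasure_space_1)
  finally show ?thesis .
qed



definition delta :: "triple set \<Rightarrow> triple set \<Rightarrow> (triple \<Rightarrow> real) \<Rightarrow> real" where
  "delta A B w = (\<Sum>T\<in>B. w T) - (\<Sum>T\<in>A. w T)"

definition Mv :: "nat \<Rightarrow> nat \<Rightarrow> (triple set \<times> triple set) set" where
  "Mv n p = {(A,B). A \<subseteq> triples n \<and> B \<subseteq> triples n \<and> A \<inter> B = {} \<and> B \<noteq> {} \<and> card A \<le> p \<and> card B \<le> p}"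

lemma finite_triples[simp]: "finite (triples n)"
  by (simp add: triples_def)

lemma card_triples: "card (triples n) = n^3"
  by (simp add: triples_def card_cartesian_product power3_eq_cube)

lemma weight_diff:
  assumes "finite S" "finite S'"
  shows "matching_weight w S' - matching_weight w S = delta (S - S') (S' - S) w"
proof -
  have "matching_weight w S' = (\<Sum>T\<in>S' \<inter> S. w T) + (\<Sum>T\<in>S' - S. w T)"
    unfolding matching_weight_def by (rule sum.Int_Diff[OF assms(2)])
  moreover have "matching_weight w S = (\<Sum>T\<in>S \<inter> S'. w T) + (\<Sum>T\<in>S - S'. w T)"
    unfolding matching_weight_def by (rule sum.Int_Diff[OF assms(1)])
  ultimately show ?thesis unfolding delta_def by (simp add: Int_commute)
qed

lemma is_3dm_finite: "is_3dm n S \<Longrightarrow> finite S"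
  unfolding is_3dm_def using finite_subset finite_triples by blast

lemma step_move:
  assumes "is_3dm n S" "pq_neighbour n p q S S'" "matching_weight w S < matching_weight w S'"
  shows "(S - S', S' - S) \<in> Mv n p \<and> matching_weight w S' - matching_weight w S = delta (S - S') (S' - S) w"
proof -
  have S': "is_3dm n S'" using assms(2) by (simp add: pq_neighbour_def)
  have fin: "finite S" "finite S'" using assms(1) S' is_3dm_finite by auto
  have ne: "S' - S \<noteq> {}"
  proof
    assume e: "S' - S = {}"
    have "card (S - S') = card (S' - S)" using assms(2) unfolding pq_neighbour_def by argo
    then have "card (S - S') = 0" using e by (simp only: card.empty)
    then have "S - S' = {}" using fin by simp
    with e have "S = S'" by blast
    with assms(3) show False by simp
  qed
  have "card (S' - S) \<le> p" using assms(2) by (simp add: pq_neighbour_def)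
  moreover have "card (S - S') \<le> p" using assms(2) by (simp add: pq_neighbour_def)
  moreover have "S \<subseteq> triples n" "S' \<subseteq> triples n" using assms(1) S' by (auto simp: is_3dm_def)
  ultimately have "(S - S', S' - S) \<in> Mv n p" using ne unfolding Mv_def by auto
  then show ?thesis using weight_diff[OF fin] by simp
qed

lemma run_3dm:
  assumes "improving_run n p q w ss k" "i \<le> k" shows "is_3dm n (ss i)"
  using assms(2)
proof (induction i)
  case 0 then show ?case using assms(1) by (simp add: improving_run_def)
next
  case (Suc i)
  then show ?case using assms(1) by (simp add: improving_run_def pq_neighbour_def)
qed

lemma run_incr:
  assumes "improving_run n p q w ss k" "i < j" "j \<le> k"
  shows "matching_weight w (ss i) < matching_weight w (ss j)"
  using assms(2,3)
proof (induction j)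
  case 0 then show ?case by simp
next
  case (Suc j)
  have st: "matching_weight w (ss j) < matching_weight w (ss (Suc j))"
    using assms(1) Suc.prems by (simp add: improving_run_def)
  show ?case
  proof (cases "i = j")
    case True then show ?thesis using st by simp
  next
    case False
    then have "matching_weight w (ss i) < matching_weight w (ss j)"
      using Suc by simp
    then show ?thesis using st by simp
  qed
qed

lemma run_len:
  assumes "improving_run n p q w ss k" shows "k < 2^(n^3)"
proof -
  have inj: "inj_on ss {..k}"
  proof (rule inj_onI)
    fix i j assume "i \<in> {..k}" "j \<in> {..k}" "ss i = ss j"
    then show "i = j" using run_incr[OF assms, of i j] run_incr[OF assms, of j i]
      by (metis atMost_iff less_irrefl linorder_neqE_nat)
  qed
  have "ss ` {..k} \<subseteq> Pow (triples n)"
    using run_3dm[OF assms] by (auto simp: is_3dm_def)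
  then have "card (ss ` {..k}) \<le> card (Pow (triples n))"
    by (intro card_mono) auto
  then have "Suc k \<le> 2^(n^3)"
    using card_image[OF inj] by (simp add: card_Pow card_triples)
  then show ?thesis by simp
qed

lemma weight_bounds:
  assumes "is_3dm n S" "\<forall>T\<in>triples n. 0 \<le> w T \<and> w T \<le> 1"
  shows "0 \<le> matching_weight w S" "matching_weight w S \<le> n"
proof -
  have sub: "S \<subseteq> triples n" and c: "card S = n" using assms(1) by (auto simp: is_3dm_def)
  show "0 \<le> matching_weight w S" unfolding matching_weight_def
    using sub assms(2) by (intro sum_nonneg) auto
  have "matching_weight w S \<le> (\<Sum>T\<in>S. 1)" unfolding matching_weight_def
    using sub assms(2) by (intro sum_mono) auto
  then show "matching_weight w S \<le> n" using c by simp
qed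

lemma run_eps:
  assumes "improving_run n p q w ss k" "\<forall>T\<in>triples n. 0 \<le> w T \<and> w T \<le> 1"
    "\<forall>(A,B)\<in>Mv n p. \<not> (0 < delta A B w \<and> delta A B w \<le> \<epsilon>)"
  shows "real k * \<epsilon> \<le> n"
proof -
  have "\<forall>i\<le>k. matching_weight w (ss 0) + real i * \<epsilon> \<le> matching_weight w (ss i)"
  proof (intro allI impI)
    fix i assume "i \<le> k" then show "matching_weight w (ss 0) + real i * \<epsilon> \<le> matching_weight w (ss i)"
    proof (induction i)
      case 0 then show ?case by simp
    next
      case (Suc i)
      have i: "i < k" using Suc.prems by simp
      have a: "is_3dm n (ss i)" using run_3dm[OF assms(1)] i by simp
      have b: "pq_neighbour n p q (ss i) (ss (Suc i))" "matching_weight w (ss i) < matching_weight w (ss (Suc i))"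
        using assms(1) i by (auto simp: improving_run_def)
      from step_move[OF a b]
      have "matching_weight w (ss i) + \<epsilon> < matching_weight w (ss (Suc i))"
        using assms(3) b(2) by fastforce
      then show ?case using Suc by (simp add: algebra_simps)
    qed
  qed
  then have "matching_weight w (ss 0) + real k * \<epsilon> \<le> matching_weight w (ss k)" by simp
  moreover have "0 \<le> matching_weight w (ss 0)" "matching_weight w (ss k) \<le> n"
    using weight_bounds[OF run_3dm[OF assms(1)] assms(2)] by auto
  ultimately show ?thesis by simp
qed

lemma exists_3dm: "is_3dm n ((\<lambda>i. (i,i,i)) ` {0..<n})"
proof -
  have "card ((\<lambda>i. (i,i,i)) ` {0..<n}) = n"
    by (subst card_image) (auto simp: inj_on_def)
  then show ?thesis unfolding is_3dm_def triples_def by force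
qed

lemma max_iter_run:
  "\<exists>ss. improving_run n p q w ss (max_iterations n p q w)"
proof -
  let ?K = "{k. \<exists>ss. improving_run n p q w ss k}"
  have "?K \<subseteq> {..<2^(n^3)}" using run_len by blast
  then have "finite ?K" using finite_subset by blast
  moreover have "0 \<in> ?K"
    using exists_3dm[of n] by (auto simp: improving_run_def intro!: exI[of _ "\<lambda>_. (\<lambda>i. (i,i,i)) ` {0..<n}"])
  ultimately have "Max ?K \<in> ?K" by (intro Max_in) auto
  then show ?thesis unfolding max_iterations_def by simp
qed



definition dens :: "(triple \<Rightarrow> real \<Rightarrow> real) \<Rightarrow> triple set \<Rightarrow> triple \<Rightarrow> real measure" where
  "dens f I i = density lborel (\<lambda>x. ennreal (if i \<in> I then f i x else indicator {0..1} x))"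

lemma sets_dens[simp, measurable_cong]: "sets (dens f I i) = sets borel"
  by (simp add: dens_def)

lemma space_dens[simp]: "space (dens f I i) = UNIV"
  by (simp add: dens_def)

lemma smoothed_eq: "smoothed_weights n f = PiM (triples n) (dens f (triples n))"
  unfolding smoothed_weights_def dens_def by (intro PiM_cong) auto

lemma dens_prob:
  assumes "\<forall>T\<in>I. valid_density \<phi> (f T)"
  shows "prob_space (dens f I i)"
proof (rule prob_spaceI)
  have "(\<integral>\<^sup>+ x. ennreal (if i \<in> I then f i x else indicator {0..1} x) \<partial>lborel) = 1"
  proof (cases "i \<in> I")
    case True then show ?thesis using assms by (simp add: valid_density_def)
  next
    case False
    have "(\<integral>\<^sup>+ x. ennreal (indicator {0..1::real} x) \<partial>lborel) = 1"
      by (simp add: ennreal_indicator)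
    then show ?thesis using False by simp
  qed
  moreover have "(\<lambda>x. ennreal (if i \<in> I then f i x else indicator {0..1} x)) \<in> borel_measurable borel"
  proof (cases "i \<in> I")
    case True then show ?thesis using assms by (simp add: valid_density_def)
  next
    case False then show ?thesis by simp
  qed
  ultimately show "emeasure (dens f I i) (space (dens f I i)) = 1"
    unfolding dens_def by (subst emeasure_density) auto
qed

lemma dens_psf:
  assumes "\<forall>T\<in>I. valid_density \<phi> (f T)"
  shows "product_sigma_finite (dens f I)"
  unfolding product_sigma_finite_def using dens_prob[OF assms] prob_space_imp_sigma_finite by blast

lemma comp_meas: "T \<in> I \<Longrightarrow> (\<lambda>w. w T) \<in> borel_measurable (PiM I (dens f I))"
  using measurable_component_singleton[of T I "dens f I"]
  by (simp add: measurable_cong_sets[OF refl sets_dens[symmetric]])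

lemma delta_meas:
  assumes "A \<subseteq> I" "B \<subseteq> I"
  shows "delta A B \<in> borel_measurable (PiM I (dens f I))"
  unfolding delta_def using assms comp_meas[of _ I f]
  by (intro borel_measurable_diff borel_measurable_sum) auto

lemma event_bound:
  assumes val: "\<forall>T\<in>I. valid_density \<phi> (f T)" and fin: "finite I" and T: "T \<in> I"
    and E: "E \<in> sets (PiM I (dens f I))"
    and u: "\<And>x y. x \<in> space (PiM (I - {T}) (dens f I)) \<Longrightarrow> ennreal (f T y) * indicator E (x(T:=y)) \<le> u x y"
    and c: "\<And>x. x \<in> space (PiM (I - {T}) (dens f I)) \<Longrightarrow> (\<integral>\<^sup>+y. u x y \<partial>lborel) \<le> c"
  shows "emeasure (PiM I (dens f I)) E \<le> c"
proof -
  have I: "insert T (I - {T}) = I" using T by blast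
  have "emeasure (PiM (insert T (I - {T})) (dens f I)) E \<le> c"
  proof (rule slice_bound)
    show "product_sigma_finite (dens f I)" by (rule dens_psf[OF val])
    show "finite (I - {T})" using fin by simp
    show "T \<notin> I - {T}" by simp
    show "E \<in> sets (PiM (insert T (I - {T})) (dens f I))" using E I by simp
    show "prob_space (PiM (I - {T}) (dens f I))" by (rule prob_space_PiM) (rule dens_prob[OF val])
    fix x assume x: "x \<in> space (PiM (I - {T}) (dens f I))"
    have m1: "(\<lambda>v. x(T := v)) \<in> measurable (dens f I T) (PiM (insert T (I - {T})) (dens f I))"
      by (rule measurable_component_update[OF x]) simp
    have m2: "(\<lambda>y. indicator E (x(T:=y)) :: ennreal) \<in> borel_measurable (dens f I T)"
      using measurable_compose[OF m1 borel_measurable_indicator[of E]] E I by simp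
    then have m3: "(\<lambda>y. indicator E (x(T:=y)) :: ennreal) \<in> borel_measurable lborel"
      by (simp add: measurable_cong_sets[OF refl sets_dens[symmetric]])
    have "(\<integral>\<^sup>+y. indicator E (x(T:=y)) \<partial>dens f I T)
        = (\<integral>\<^sup>+y. ennreal (f T y) * indicator E (x(T:=y)) \<partial>lborel)"
    proof -
      have fm: "f T \<in> borel_measurable borel" using val T by (simp add: valid_density_def)
      have "(\<integral>\<^sup>+y. indicator E (x(T:=y)) \<partial>dens f I T)
          = (\<integral>\<^sup>+y. ennreal (if T \<in> I then f T y else indicator {0..1} y) * indicator E (x(T:=y)) \<partial>lborel)"
        unfolding dens_def using fm m3 by (subst nn_integral_density) auto
      then show ?thesis using T by simp
    qed
    also have "\<dots> \<le> (\<integral>\<^sup>+y. u x y \<partial>lborel)"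
      using u[OF x] by (intro nn_integral_mono) auto
    also have "\<dots> \<le> c" using c[OF x] .
    finally show "(\<integral>\<^sup>+y. indicator E (x(T:=y)) \<partial>dens f I T) \<le> c" .
  qed
  then show ?thesis using I by simp
qed



definition Pm :: "nat \<Rightarrow> (triple \<Rightarrow> real \<Rightarrow> real) \<Rightarrow> (triple \<Rightarrow> real) measure" where
  "Pm n f = PiM (triples n) (dens f (triples n))"

definition EvM :: "nat \<Rightarrow> (triple \<Rightarrow> real \<Rightarrow> real) \<Rightarrow> real \<Rightarrow> triple set \<times> triple set \<Rightarrow> (triple \<Rightarrow> real) set" where
  "EvM n f \<epsilon> m = delta (fst m) (snd m) -` {0<..\<epsilon>} \<inter> space (Pm n f)"

definition Bad :: "nat \<Rightarrow> (triple \<Rightarrow> real \<Rightarrow> real) \<Rightarrow> triple \<Rightarrow> (triple \<Rightarrow> real) set" where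
  "Bad n f T = (\<lambda>w. w T) -` (- {0..1}) \<inter> space (Pm n f)"

lemma EvM_sets: "m \<in> Mv n p \<Longrightarrow> EvM n f \<epsilon> m \<in> sets (Pm n f)"
  unfolding EvM_def Pm_def Mv_def
  by (intro measurable_sets[OF delta_meas]) auto

lemma Bad_sets: "T \<in> triples n \<Longrightarrow> Bad n f T \<in> sets (Pm n f)"
  unfolding Bad_def Pm_def
  by (intro measurable_sets[OF comp_meas]) auto

lemma phi_nonneg: "valid_density \<phi> g \<Longrightarrow> 0 \<le> \<phi>"
  unfolding valid_density_def by (meson order.trans)

lemma EvM_bound:
  assumes val: "\<forall>T\<in>triples n. valid_density \<phi> (f T)" and m: "m \<in> Mv n p" and e: "0 \<le> \<epsilon>"
  shows "emeasure (Pm n f) (EvM n f \<epsilon> m) \<le> ennreal (\<phi> * \<epsilon>)"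
proof -
  obtain A B where mAB: "m = (A,B)" by (cases m)
  then have AB: "A \<subseteq> triples n" "B \<subseteq> triples n" "A \<inter> B = {}" "B \<noteq> {}" using m by (auto simp: Mv_def)
  obtain T where T: "T \<in> B" using AB(4) by blast
  have TI: "T \<in> triples n" using T AB by auto
  have TA: "T \<notin> A" using T AB(3) by blast
  have finB: "finite B" by (rule finite_subset[OF AB(2)]) simp
  have ph: "0 \<le> \<phi>" by (rule phi_nonneg[OF val[rule_format, OF TI]])
  define c where "c x = (\<Sum>t\<in>B - {T}. x t) - (\<Sum>t\<in>A. x t)" for x :: "triple \<Rightarrow> real"
  have dl: "delta A B (x(T:=y)) = y + c x" for x y
  proof -
    have s1: "(\<Sum>t\<in>B. (x(T:=y)) t) = (x(T:=y)) T + (\<Sum>t\<in>B - {T}. (x(T:=y)) t)"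
      by (rule sum.remove[OF finB T])
    have s2: "(\<Sum>t\<in>B - {T}. (x(T:=y)) t) = (\<Sum>t\<in>B - {T}. x t)" by (intro sum.cong) auto
    have s3: "(\<Sum>t\<in>A. (x(T:=y)) t) = (\<Sum>t\<in>A. x t)" using TA by (intro sum.cong) auto
    show ?thesis unfolding delta_def c_def s1 s2 s3 by simp
  qed
  show ?thesis unfolding Pm_def
  proof (rule event_bound[OF val _ TI, where u = "\<lambda>x y. ennreal \<phi> * indicator {- c x <.. \<epsilon> - c x} y"])
    show "finite (triples n)" by simp
    show "EvM n f \<epsilon> m \<in> sets (Pi\<^sub>M (triples n) (dens f (triples n)))"
      using EvM_sets[OF m] by (simp add: Pm_def)
    fix x y
    show "ennreal (f T y) * indicator (EvM n f \<epsilon> m) (x(T := y)) \<le> ennreal \<phi> * indicator {- c x<..\<epsilon> - c x} y"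
    proof (cases "x(T := y) \<in> EvM n f \<epsilon> m")
      case True
      then have "0 < y + c x" "y + c x \<le> \<epsilon>" using dl[of x y] by (auto simp: EvM_def mAB)
      then have "y \<in> {- c x <.. \<epsilon> - c x}" by auto
      moreover have "f T y \<le> \<phi>" using val TI by (simp add: valid_density_def)
      ultimately show ?thesis using True by (simp add: ennreal_leI)
    next
      case False then show ?thesis by simp
    qed
  next
    fix x
    show "(\<integral>\<^sup>+y. ennreal \<phi> * indicator {- c x <.. \<epsilon> - c x} y \<partial>lborel) \<le> ennreal (\<phi> * \<epsilon>)"
      using e ph by (simp add: nn_integral_cmult_indicator ennreal_mult)
  qed
qed

lemma Bad_bound:
  assumes val: "\<forall>T\<in>triples n. valid_density \<phi> (f T)" and TI: "T \<in> triples n"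
  shows "emeasure (Pm n f) (Bad n f T) \<le> 0"
  unfolding Pm_def
proof (rule event_bound[OF val _ TI, where u = "\<lambda>x y. 0"])
  show "finite (triples n)" by simp
  show "Bad n f T \<in> sets (Pi\<^sub>M (triples n) (dens f (triples n)))"
    using Bad_sets[OF TI] by (simp add: Pm_def)
  fix x y
  show "ennreal (f T y) * indicator (Bad n f T) (x(T := y)) \<le> 0"
  proof (cases "x(T := y) \<in> Bad n f T")
    case True
    then have "y \<notin> {0..1}" by (auto simp: Bad_def)
    then have "f T y = 0" using val TI by (simp add: valid_density_def)
    then show ?thesis by simp
  next
    case False then show ?thesis by simp
  qed
qed simp

definition Eall :: "nat \<Rightarrow> nat \<Rightarrow> (triple \<Rightarrow> real \<Rightarrow> real) \<Rightarrow> real \<Rightarrow> (triple \<Rightarrow> real) set" where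
  "Eall n p f \<epsilon> = (\<Union>m\<in>Mv n p. EvM n f \<epsilon> m) \<union> (\<Union>T\<in>triples n. Bad n f T)"

lemma finite_Mv: "finite (Mv n p)"
proof -
  have "Mv n p \<subseteq> Pow (triples n) \<times> Pow (triples n)" unfolding Mv_def by (simp add: subset_iff case_prod_beta)
  then show ?thesis by (rule finite_subset) simp
qed

lemma Eall_sets: "Eall n p f \<epsilon> \<in> sets (Pm n f)"
  unfolding Eall_def
proof (rule sets.Un)
  show "(\<Union>m\<in>Mv n p. EvM n f \<epsilon> m) \<in> sets (Pm n f)"
    by (rule sets.finite_UN[OF finite_Mv EvM_sets])
  show "(\<Union>T\<in>triples n. Bad n f T) \<in> sets (Pm n f)"
    by (rule sets.finite_UN[OF finite_triples Bad_sets])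
qed

lemma Eall_bound:
  assumes val: "\<forall>T\<in>triples n. valid_density \<phi> (f T)" and e: "0 \<le> \<epsilon>"
  shows "emeasure (Pm n f) (Eall n p f \<epsilon>) \<le> of_nat (card (Mv n p)) * ennreal (\<phi> * \<epsilon>)"
proof -
  have "emeasure (Pm n f) (Eall n p f \<epsilon>) \<le>
      emeasure (Pm n f) (\<Union>m\<in>Mv n p. EvM n f \<epsilon> m) + emeasure (Pm n f) (\<Union>T\<in>triples n. Bad n f T)"
    unfolding Eall_def using EvM_sets Bad_sets finite_Mv
    by (intro emeasure_subadditive sets.finite_UN) auto
  moreover have "emeasure (Pm n f) (\<Union>m\<in>Mv n p. EvM n f \<epsilon> m) \<le> (\<Sum>m\<in>Mv n p. emeasure (Pm n f) (EvM n f \<epsilon> m))"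
    using EvM_sets finite_Mv by (intro emeasure_subadditive_finite) auto
  moreover have "(\<Sum>m\<in>Mv n p. emeasure (Pm n f) (EvM n f \<epsilon> m)) \<le> (\<Sum>m\<in>Mv n p. ennreal (\<phi> * \<epsilon>))"
    using EvM_bound[OF val _ e] by (intro sum_mono) auto
  moreover have "emeasure (Pm n f) (\<Union>T\<in>triples n. Bad n f T) \<le> (\<Sum>T\<in>triples n. emeasure (Pm n f) (Bad n f T))"
    using Bad_sets by (intro emeasure_subadditive_finite) auto
  moreover have "(\<Sum>T\<in>triples n. emeasure (Pm n f) (Bad n f T)) \<le> (\<Sum>T\<in>triples n. 0)"
    using Bad_bound[OF val] by (intro sum_mono) auto
  moreover have "(\<Sum>m\<in>Mv n p. ennreal (\<phi> * \<epsilon>)) = of_nat (card (Mv n p)) * ennreal (\<phi> * \<epsilon>)" by (rule sum_constant)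
  ultimately have "emeasure (Pm n f) (Eall n p f \<epsilon>) \<le> of_nat (card (Mv n p)) * ennreal (\<phi> * \<epsilon>) + (\<Sum>T\<in>triples n. 0)"
    by (smt (verit, best) add_mono order_trans)
  then show ?thesis by (simp only: sum.neutral_const add_0_right)
qed

lemma card_Mv:
  assumes "1 \<le> n"
  shows "card (Mv n p) \<le> ((p+1) * n^(3*p))^2"
proof -
  define Ls where "Ls = {xs. set xs \<subseteq> triples n \<and> length xs \<le> p}"
  have sub: "Mv n p \<subseteq> (\<lambda>(xs,ys). (set xs, set ys)) ` (Ls \<times> Ls)"
  proof
    fix m assume m: "m \<in> Mv n p"
    obtain A B where mAB: "m = (A,B)" by (cases m)
    have A: "A \<subseteq> triples n" "card A \<le> p" and B: "B \<subseteq> triples n" "card B \<le> p"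
      using m mAB by (auto simp: Mv_def)
    have fA: "finite A" by (rule finite_subset[OF A(1)]) simp
    have fB: "finite B" by (rule finite_subset[OF B(1)]) simp
    obtain xs where xs: "set xs = A" "distinct xs" using finite_distinct_list[OF fA] by blast
    obtain ys where ys: "set ys = B" "distinct ys" using finite_distinct_list[OF fB] by blast
    have "length xs = card A" using distinct_card[OF xs(2)] xs(1) by simp
    then have "xs \<in> Ls" using xs(1) A unfolding Ls_def by simp
    moreover have "length ys = card B" using distinct_card[OF ys(2)] ys(1) by simp
    then have "ys \<in> Ls" using ys(1) B unfolding Ls_def by simp
    ultimately have "(xs, ys) \<in> Ls \<times> Ls" by simp
    moreover have "m = (\<lambda>(xs,ys). (set xs, set ys)) (xs, ys)" using mAB xs ys by simp
    ultimately show "m \<in> (\<lambda>(xs,ys). (set xs, set ys)) ` (Ls \<times> Ls)" by blast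
  qed
  have finL: "finite Ls" unfolding Ls_def by (intro finite_lists_length_le) simp
  have cL: "card Ls = (\<Sum>i\<le>p. (n^3)^i)"
    unfolding Ls_def by (simp add: card_lists_length_le card_triples)
  also have "\<dots> \<le> (\<Sum>i\<le>p. (n^3)^p)"
    using assms by (intro sum_mono power_increasing) auto
  also have "\<dots> = (p+1) * n^(3*p)" by (simp add: power_mult)
  finally have cL2: "card Ls \<le> (p+1) * n^(3*p)" .
  have "card (Mv n p) \<le> card ((\<lambda>(xs,ys). (set xs, set ys)) ` (Ls \<times> Ls))"
    using sub finL by (intro card_mono) auto
  also have "\<dots> \<le> card (Ls \<times> Ls)" by (rule card_image_le) (simp add: finL)
  also have "\<dots> = card Ls ^ 2" by (simp add: card_cartesian_product power2_eq_square)
  also have "\<dots> \<le> ((p+1) * n^(3*p))^2" using cL2 by (simp add: power_mono)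
  finally show ?thesis .
qed



lemma phi_ge1: assumes "valid_density \<phi> g" shows "1 \<le> \<phi>"
proof -
  have ph: "0 \<le> \<phi>" using phi_nonneg[OF assms] .
  have "1 = (\<integral>\<^sup>+ x. ennreal (g x) \<partial>lborel)" using assms by (simp add: valid_density_def)
  also have "\<dots> \<le> (\<integral>\<^sup>+ x. ennreal \<phi> * indicator {0..1::real} x \<partial>lborel)"
  proof (rule nn_integral_mono)
    fix x show "ennreal (g x) \<le> ennreal \<phi> * indicator {0..1} x"
      using assms by (cases "x \<in> {0..1}") (auto simp: valid_density_def intro!: ennreal_leI)
  qed
  also have "\<dots> = ennreal \<phi>" by (simp add: nn_integral_cmult_indicator)
  finally have "ennreal 1 \<le> ennreal \<phi>" by simp
  then show ?thesis using ph by simp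
qed

lemma K_zero:
  assumes "n = 0" shows "max_iterations n p q w = 0"
proof -
  obtain ss where "improving_run n p q w ss (max_iterations n p q w)" using max_iter_run by blast
  from run_len[OF this] show ?thesis using assms by simp
qed

lemma pointwise:
  assumes n: "1 \<le> n" and w: "w \<in> space (Pm n f)"
  shows "real (max_iterations n p q w) \<le> 1 + (\<Sum>j<n^3. 2^j * indicator (Eall n p f (real n / 2^j)) w)"
proof -
  define K where "K = max_iterations n p q w"
  obtain ss where run: "improving_run n p q w ss K" using max_iter_run unfolding K_def by blast
  have "K \<le> 2^(n^3)" using run_len[OF run] by simp
  from dyadic[OF this] have "real K \<le> real (1 + (\<Sum>j<n^3. 2^j * (if 2^j < K then 1 else 0)))"
    by linarith
  also have "\<dots> = 1 + (\<Sum>j<n^3. 2^j * (if 2^j < K then 1 else 0::real))"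
    unfolding of_nat_add of_nat_sum by (auto intro!: sum.cong)
  also have "\<dots> \<le> 1 + (\<Sum>j<n^3. 2^j * indicator (Eall n p f (real n / 2^j)) w)"
  proof (intro add_left_mono sum_mono mult_left_mono)
    fix j
    show "(if 2^j < K then 1 else 0::real) \<le> indicator (Eall n p f (real n / 2^j)) w"
    proof (cases "2^j < K")
      case False then show ?thesis by simp
    next
      case True
      have "w \<in> Eall n p f (real n / 2^j)"
      proof (rule ccontr)
        assume nw: "w \<notin> Eall n p f (real n / 2^j)"
        have b: "\<forall>T\<in>triples n. 0 \<le> w T \<and> w T \<le> 1"
        proof
          fix T assume T: "T \<in> triples n"
          then have "w \<notin> Bad n f T" using nw by (auto simp: Eall_def)
          then show "0 \<le> w T \<and> w T \<le> 1" using w by (auto simp: Bad_def)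
        qed
        have e: "\<forall>(A,B)\<in>Mv n p. \<not> (0 < delta A B w \<and> delta A B w \<le> real n / 2^j)"
        proof (clarify)
          fix A B assume m: "(A,B) \<in> Mv n p" "0 < delta A B w" "delta A B w \<le> real n / 2^j"
          then have "w \<in> EvM n f (real n / 2^j) (A,B)" using w by (auto simp: EvM_def)
          then show False using nw m(1) by (auto simp: Eall_def)
        qed
        have "real K * (real n / 2^j) \<le> real n" by (rule run_eps[OF run b e])
        then have "real K * real n \<le> real n * 2^j" by (simp add: field_simps)
        then have "real K \<le> 2^j" using n by (simp add: mult.commute)
        then have "K \<le> 2^j"
          by (metis of_nat_le_iff of_nat_numeral of_nat_power)
        then show False using True by simp
      qed
      then show ?thesis by simp
    qed
  qed simp
  finally show ?thesis unfolding K_def .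
qed



lemma real_arith:
  fixes a phi :: real and Nm p :: nat
  assumes a: "1 \<le> a" and ph: "1 \<le> phi" and Nm: "real Nm \<le> real ((p+1)^2) * a^(6*p)"
  shows "1 + a^3 * (real Nm * phi * a) \<le> (1 + real ((p+1)^2)) * a^(6*p+6) * phi"
proof -
  have a0: "0 \<le> a" using a by simp
  have k: "0 \<le> real ((p+1)^2)" by simp
  have "a^3 * (real Nm * phi * a) = (real Nm) * (a^4 * phi)" by (simp add: algebra_simps power_numeral_reduce)
  also have "\<dots> \<le> (real ((p+1)^2) * a^(6*p)) * (a^4 * phi)"
    using Nm a0 ph by (intro mult_right_mono) auto
  also have "\<dots> = real ((p+1)^2) * (a^(6*p+4) * phi)" by (simp add: power_add algebra_simps)
  also have "\<dots> \<le> real ((p+1)^2) * (a^(6*p+6) * phi)"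
    using a ph k by (intro mult_left_mono mult_right_mono power_increasing) auto
  finally have 1: "a^3 * (real Nm * phi * a) \<le> real ((p+1)^2) * (a^(6*p+6) * phi)" .
  have "1 \<le> a^(6*p+6)" using a by (rule one_le_power)
  then have 2: "1 \<le> a^(6*p+6) * phi" using ph
    by (metis mult_mono' mult.right_neutral zero_le_one)
  show ?thesis using 1 2 by (simp add: algebra_simps)
qed

lemma integral_bound:
  assumes val: "\<forall>T\<in>triples n. valid_density \<phi> (f T)" and n: "1 \<le> n"
  shows "(\<integral>\<^sup>+ w. ennreal (real (max_iterations n p q w)) \<partial>Pm n f)
      \<le> ennreal ((1 + real ((p+1)^2)) * real n ^ (6 * p + 6) * \<phi>)"
proof -
  have T0: "(0,0,0) \<in> triples n" using n by (simp add: triples_def)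
  have ph1: "1 \<le> \<phi>" using phi_ge1 val T0 by blast
  interpret P: prob_space "Pm n f" unfolding Pm_def by (intro prob_space_PiM dens_prob[OF val])
  define E where "E j = Eall n p f (real n / 2^j)" for j
  define Nm where "Nm = card (Mv n p)"
  have Es: "E j \<in> sets (Pm n f)" for j using Eall_sets by (simp add: E_def)
  have "(\<integral>\<^sup>+w. ennreal (real (max_iterations n p q w)) \<partial>Pm n f)
      \<le> (\<integral>\<^sup>+w. (1 + (\<Sum>j<n^3. ennreal (2^j) * indicator (E j) w)) \<partial>Pm n f)"
  proof (rule nn_integral_mono)
    fix w assume w: "w \<in> space (Pm n f)"
    have "ennreal (real (max_iterations n p q w)) \<le> ennreal (1 + (\<Sum>j<n^3. 2^j * indicator (E j) w))"
      using pointwise[OF n w] unfolding E_def by (rule ennreal_leI)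
    also have "\<dots> = ennreal 1 + ennreal (\<Sum>j<n^3. 2^j * indicator (E j) w)"
      by (rule ennreal_plus) (auto intro!: sum_nonneg)
    also have "ennreal (\<Sum>j<n^3. 2^j * indicator (E j) w) = (\<Sum>j<n^3. ennreal (2^j * indicator (E j) w))"
      by (rule sum_ennreal[symmetric]) simp
    also have "\<dots> = (\<Sum>j<n^3. ennreal (2^j) * indicator (E j) w)"
      by (intro sum.cong refl) (simp add: ennreal_mult ennreal_indicator)
    finally show "ennreal (real (max_iterations n p q w)) \<le> 1 + (\<Sum>j<n^3. ennreal (2^j) * indicator (E j) w)" by simp
  qed
  also have "\<dots> = 1 + (\<Sum>j<n^3. ennreal (2^j) * emeasure (Pm n f) (E j))"
  proof -
    have m: "(\<lambda>w. ennreal (2^j) * indicator (E j) w) \<in> borel_measurable (Pm n f)" for j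
      using Es[of j] by (intro borel_measurable_times_ennreal) auto
    have ms: "(\<lambda>w. \<Sum>j<n^3. ennreal (2^j) * indicator (E j) w) \<in> borel_measurable (Pm n f)"
      using m by (rule borel_measurable_sum)
    have "(\<integral>\<^sup>+w. (1 + (\<Sum>j<n^3. ennreal (2^j) * indicator (E j) w)) \<partial>Pm n f)
        = (\<integral>\<^sup>+w. 1 \<partial>Pm n f) + (\<integral>\<^sup>+w. (\<Sum>j<n^3. ennreal (2^j) * indicator (E j) w) \<partial>Pm n f)"
      using ms by (intro nn_integral_add) auto
    also have "(\<integral>\<^sup>+w. 1 \<partial>Pm n f) = 1" by (simp add: P.emeasure_space_1)
    also have "(\<integral>\<^sup>+w. (\<Sum>j<n^3. ennreal (2^j) * indicator (E j) w) \<partial>Pm n f)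
       = (\<Sum>j<n^3. (\<integral>\<^sup>+w. ennreal (2^j) * indicator (E j) w \<partial>Pm n f))"
      using m by (intro nn_integral_sum) auto
    also have "\<dots> = (\<Sum>j<n^3. ennreal (2^j) * emeasure (Pm n f) (E j))"
      using Es by (intro sum.cong refl nn_integral_cmult_indicator) auto
    finally show ?thesis .
  qed
  also have "\<dots> \<le> 1 + (\<Sum>j<n^3. ennreal (real Nm * \<phi> * real n))"
  proof (intro add_left_mono sum_mono)
    fix j
    have "emeasure (Pm n f) (E j) \<le> of_nat Nm * ennreal (\<phi> * (real n / 2^j))"
      unfolding E_def Nm_def by (rule Eall_bound[OF val]) simp
    then have "ennreal (2^j) * emeasure (Pm n f) (E j) \<le> ennreal (2^j) * (of_nat Nm * ennreal (\<phi> * (real n / 2^j)))"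
      by (rule mult_left_mono) simp
    also have "\<dots> = ennreal (2^j * (real Nm * (\<phi> * (real n / 2^j))))"
    proof -
      have p0: "0 \<le> \<phi> * (real n / 2^j)" using ph1 by (intro mult_nonneg_nonneg divide_nonneg_pos) auto
      have p0': "0 \<le> \<phi> * real n / 2^j" using p0 by simp
      have p1: "0 \<le> real Nm * (\<phi> * real n) / 2^j" using ph1 by (intro divide_nonneg_pos mult_nonneg_nonneg) auto
      have "ennreal (real Nm * (\<phi> * (real n / 2^j))) = ennreal (real Nm) * ennreal (\<phi> * (real n / 2^j))"
        by (rule ennreal_mult) (simp_all add: p0 p0' p1)
      moreover have "ennreal (2^j * (real Nm * (\<phi> * (real n / 2^j)))) = ennreal (2^j) * ennreal (real Nm * (\<phi> * (real n / 2^j)))"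
        by (rule ennreal_mult) (simp_all add: p0 p0' p1)
      ultimately show ?thesis by (simp only: ennreal_of_nat_eq_real_of_nat)
    qed
    also have "2^j * (real Nm * (\<phi> * (real n / 2^j))) = real Nm * \<phi> * real n" by simp
    finally show "ennreal (2^j) * emeasure (Pm n f) (E j) \<le> ennreal (real Nm * \<phi> * real n)" .
  qed
  also have "\<dots> = ennreal (1 + real n^3 * (real Nm * \<phi> * real n))"
    using ph1 by (simp add: ennreal_of_nat_eq_real_of_nat ennreal_mult ennreal_plus)
  also have "\<dots> \<le> ennreal ((1 + real ((p+1)^2)) * real n ^ (6 * p + 6) * \<phi>)"
  proof (rule ennreal_leI, rule real_arith)
    show "1 \<le> real n" using n by simp
    show "1 \<le> \<phi>" by fact
    have "Nm \<le> ((p+1) * n^(3*p))^2" unfolding Nm_def by (rule card_Mv[OF n])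
    then have "real Nm \<le> real (((p+1) * n^(3*p))^2)" by (simp only: of_nat_le_iff)
    also have "\<dots> = real ((p+1)^2) * real n^(6*p)"
    proof -
      have e1: "(n^(3*p))^2 = n^(6*p)" by (metis power_mult mult.commute mult_2 numeral_Bit0 numeral_times_numeral numeral_One mult.left_commute)
      have "((p+1) * n^(3*p))^2 = (p+1)^2 * n^(6*p)" by (simp only: power_mult_distrib e1)
      then show ?thesis by (simp only: of_nat_mult of_nat_power)
    qed
    finally show "real Nm \<le> real ((p+1)^2) * real n^(6*p)" .
  qed
  finally show ?thesis .
qed

theorem mainTheorem14:
  fixes p q :: nat
  shows "\<exists>C>0. \<forall>(n::nat) (\<phi>::real) (f::triple \<Rightarrow> real \<Rightarrow> real).
           (\<forall>T\<in>triples n. valid_density \<phi> (f T)) \<longrightarrow>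
           (\<integral>\<^sup>+ w. ennreal (real (max_iterations n p q w)) \<partial>smoothed_weights n f)
             \<le> ennreal (C * real n ^ (6 * p + 6) * \<phi>)"
proof (intro exI[of _ "1 + real ((p+1)^2)"] conjI allI impI)
  show "0 < 1 + real ((p+1)^2)" by (intro add_pos_nonneg) auto
  fix n \<phi> f assume val: "\<forall>T\<in>triples n. valid_density \<phi> (f T)"
  have sw: "smoothed_weights n f = Pm n f" by (simp add: smoothed_eq Pm_def)
  show "(\<integral>\<^sup>+ w. ennreal (real (max_iterations n p q w)) \<partial>smoothed_weights n f)
             \<le> ennreal ((1 + real ((p+1)^2)) * real n ^ (6 * p + 6) * \<phi>)"
  proof (cases "n = 0")
    case True
    then have "(\<lambda>w. ennreal (real (max_iterations n p q w))) = (\<lambda>w. 0)" using K_zero by auto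
    then show ?thesis by simp
  next
    case False
    then show ?thesis unfolding sw using integral_bound[OF val] by simp
  qed
qed


end
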